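(* Let $\omega=\frac{-1+\sqrt{-3}}{2}$. For $k=1,2,3$ let $C_k\subset\mathbf{C}^2$ be the affine curve $y_k^2=x_k^3-1$ and $g_k(x_k,y_k)=(\omega x_k,-y_k)$. Let $V=C_1\times C_2\times C_3$, $g=g_1\times g_2\times g_3$, and $W=V/\langle g\rangle$. Then the affine coordinate ring $\mathbf{C}[W]$ is the subring $$R=\mathbf{C}[y_1^2,y_2^2,y_3^2,y_1y_2,y_2y_3,y_3y_1,\ x_1^ix_2^jx_3^k\ (0\le i,j,k\le 2,\ i+j+k=3)]$$ of the ring $\tilde R=\mathbf{C}[y_1,y_2,y_3,x_1,x_2,x_3]/(y_1^2-x_1^3+1,\ y_2^2-x_2^3+1,\ y_3^2-x_3^3+1)$.
   Context: $\tilde R$ is the affine coordinate ring of $V$, and $\mathbf{C}[W]$ is identified with the invariant subring $\tilde R^{g}$. *)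

theory Defs
  imports Complex_Main
begin

datatype var = X1 | X2 | X3 | Y1 | Y2 | Y3

type_synonym pt = "var \<Rightarrow> complex"

inductive_set gen_alg :: "(pt \<Rightarrow> complex) set \<Rightarrow> (pt \<Rightarrow> complex) set"
  for S :: "(pt \<Rightarrow> complex) set" where
  gen: "f \<in> S \<Longrightarrow> f \<in> gen_alg S"
| const: "(\<lambda>_. c) \<in> gen_alg S"
| add: "f \<in> gen_alg S \<Longrightarrow> h \<in> gen_alg S \<Longrightarrow> (\<lambda>p. f p + h p) \<in> gen_alg S"
| mult: "f \<in> gen_alg S \<Longrightarrow> h \<in> gen_alg S \<Longrightarrow> (\<lambda>p. f p * h p) \<in> gen_alg S"

definition poly_funs :: "(pt \<Rightarrow> complex) set" where
  "poly_funs = gen_alg {(\<lambda>p. p v) | v. True}"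

definition omega :: complex where
  "omega = (-1 + \<i> * complex_of_real (sqrt 3)) / 2"

definition V :: "pt set" where
  "V = {p. p Y1 ^ 2 = p X1 ^ 3 - 1 \<and> p Y2 ^ 2 = p X2 ^ 3 - 1 \<and> p Y3 ^ 2 = p X3 ^ 3 - 1}"

definition gmap :: "pt \<Rightarrow> pt" where
  "gmap p = (\<lambda>v. case v of X1 \<Rightarrow> omega * p X1 | X2 \<Rightarrow> omega * p X2 | X3 \<Rightarrow> omega * p X3
                         | Y1 \<Rightarrow> - p Y1 | Y2 \<Rightarrow> - p Y2 | Y3 \<Rightarrow> - p Y3)"

definition R_gens :: "(pt \<Rightarrow> complex) set" where
  "R_gens =
     {(\<lambda>p. p Y1 ^ 2), (\<lambda>p. p Y2 ^ 2), (\<lambda>p. p Y3 ^ 2),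
      (\<lambda>p. p Y1 * p Y2), (\<lambda>p. p Y2 * p Y3), (\<lambda>p. p Y3 * p Y1)}
   \<union> {(\<lambda>p. p X1 ^ i * p X2 ^ j * p X3 ^ k) | i j k.
        i \<le> 2 \<and> j \<le> 2 \<and> k \<le> 2 \<and> i + j + k = 3}"

end

theory Submission
  imports Defs
begin

lemma omega_sq: "omega^2 = - 1 - omega"
  unfolding omega_def
  by (simp add: complex_eq_iff power2_eq_square field_simps)
lemma omega3: "omega^3 = 1"
proof -
  have "omega^3 = omega * omega^2" by (simp add: power3_eq_cube power2_eq_square)
  also have "\<dots> = omega * (- 1 - omega)" by (simp add: omega_sq)
  also have "\<dots> = - omega - omega^2" by (simp add: algebra_simps power2_eq_square)
  also have "\<dots> = 1" by (simp add: omega_sq)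
  finally show ?thesis .
qed

lemma gmap_V: "p \<in> V \<Longrightarrow> gmap p \<in> V"
  unfolding V_def gmap_def by (simp add: power_mult_distrib omega3)

lemma R_gens_inv: "f \<in> R_gens \<Longrightarrow> f (gmap p) = f p"
proof -
  have m: "omega^i * omega^j * omega^k = 1" if "i+j+k = 3" for i j k
    by (metis power_add omega3 that)
  assume "f \<in> R_gens"
  then consider "f \<in> {(\<lambda>p. p Y1 ^ 2), (\<lambda>p. p Y2 ^ 2), (\<lambda>p. p Y3 ^ 2),
      (\<lambda>p. p Y1 * p Y2), (\<lambda>p. p Y2 * p Y3), (\<lambda>p. p Y3 * p Y1)}"
    | i j k where "f = (\<lambda>p. p X1 ^ i * p X2 ^ j * p X3 ^ k)" "i+j+k = 3"
    unfolding R_gens_def by blast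
  then show ?thesis
  proof cases
    case 1 then show ?thesis by (auto simp: gmap_def)
  next
    case (2 i j k)
    have "f (gmap p) = (omega^i * omega^j * omega^k) * (p X1 ^ i * p X2 ^ j * p X3 ^ k)"
      unfolding 2 gmap_def by (simp add: power_mult_distrib algebra_simps)
    then show ?thesis using m[OF 2(2)] 2(1) by simp
  qed
qed


lemma gen_alg_inv: "f \<in> gen_alg R_gens \<Longrightarrow> f (gmap p) = f p"
  by (induction rule: gen_alg.induct) (auto simp: R_gens_inv)

definition Rv :: "(pt \<Rightarrow> complex) set" where
  "Rv = {f. \<exists>h\<in>gen_alg R_gens. \<forall>p\<in>V. f p = h p}"

lemma Rv_gen: "f \<in> R_gens \<Longrightarrow> f \<in> Rv"
  unfolding Rv_def using gen_alg.gen by blast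
lemma Rv_const: "(\<lambda>_. c) \<in> Rv"
  unfolding Rv_def mem_Collect_eq by (rule bexI[where x="\<lambda>_. c"]) (auto intro: gen_alg.const)
lemma Rv_add: "f \<in> Rv \<Longrightarrow> h \<in> Rv \<Longrightarrow> (\<lambda>p. f p + h p) \<in> Rv"
  unfolding Rv_def by (auto 0 3 intro: gen_alg.add)
lemma Rv_mult: "f \<in> Rv \<Longrightarrow> h \<in> Rv \<Longrightarrow> (\<lambda>p. f p * h p) \<in> Rv"
  unfolding Rv_def by (auto 0 3 intro: gen_alg.mult)
lemma Rv_eq: "f \<in> Rv \<Longrightarrow> (\<And>p. p \<in> V \<Longrightarrow> h p = f p) \<Longrightarrow> h \<in> Rv"
  unfolding Rv_def by auto

lemma Rv_mono: "i \<le> 2 \<Longrightarrow> j \<le> 2 \<Longrightarrow> k \<le> 2 \<Longrightarrow> i+j+k = 3 \<Longrightarrow>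
   (\<lambda>p. p X1 ^ i * p X2 ^ j * p X3 ^ k) \<in> Rv"
  by (rule Rv_gen) (auto simp: R_gens_def)

lemma Rv_ysq: "u \<in> {Y1,Y2,Y3} \<Longrightarrow> (\<lambda>p. p u ^ 2) \<in> Rv"
  by (rule Rv_gen) (auto simp: R_gens_def)

lemma Rv_yy: "u \<in> {Y1,Y2,Y3} \<Longrightarrow> v \<in> {Y1,Y2,Y3} \<Longrightarrow> (\<lambda>p. p u * p v) \<in> Rv"
proof -
  have a: "(\<lambda>p. p Y1 * p Y2) \<in> Rv" "(\<lambda>p. p Y2 * p Y3) \<in> Rv" "(\<lambda>p. p Y3 * p Y1) \<in> Rv"
    by (rule Rv_gen; auto simp: R_gens_def)+
  have b: "(\<lambda>p. p Y2 * p Y1) \<in> Rv" "(\<lambda>p. p Y3 * p Y2) \<in> Rv" "(\<lambda>p. p Y1 * p Y3) \<in> Rv"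
    using a by (simp_all add: mult.commute)
  have c: "(\<lambda>p. p u * p u) \<in> Rv" if "u \<in> {Y1,Y2,Y3}" for u
    using Rv_ysq[OF that] by (simp add: power2_eq_square)
  assume "u \<in> {Y1,Y2,Y3}" "v \<in> {Y1,Y2,Y3}"
  then show ?thesis using a b c by auto
qed

lemma Rv_xcube: "u \<in> {X1,X2,X3} \<Longrightarrow> (\<lambda>p. p u * p u * p u) \<in> Rv"
proof -
  assume u: "u \<in> {X1,X2,X3}"
  then obtain w where w: "w \<in> {Y1,Y2,Y3}" "\<forall>p\<in>V. p w ^ 2 = p u ^ 3 - 1"
    unfolding V_def by auto
  have "(\<lambda>p. p w ^ 2 + 1) \<in> Rv" using Rv_add[OF Rv_ysq[OF w(1)] Rv_const] .
  then show ?thesis by (rule Rv_eq) (use w in \<open>auto simp: power3_eq_cube\<close>)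
qed

definition cnt :: "var \<Rightarrow> var \<Rightarrow> var \<Rightarrow> var \<Rightarrow> nat" where
  "cnt u v w x = (if u = x then 1 else 0) + (if v = x then 1 else 0) + (if w = x then 1 else 0)"

lemma xxx_eq: assumes "u \<in> {X1,X2,X3}" "v \<in> {X1,X2,X3}" "w \<in> {X1,X2,X3}"
  shows "(\<lambda>p::pt. p u * p v * p w) = (\<lambda>p. p X1 ^ cnt u v w X1 * p X2 ^ cnt u v w X2 * p X3 ^ cnt u v w X3)"
  using assms unfolding cnt_def apply (intro ext) apply (cases u; cases v; cases w) apply simp_all
  done

lemma Rv_xxx: assumes "u \<in> {X1,X2,X3}" "v \<in> {X1,X2,X3}" "w \<in> {X1,X2,X3}"
  shows "(\<lambda>p. p u * p v * p w) \<in> Rv"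
proof (cases "u = v \<and> v = w")
  case True then show ?thesis using Rv_xcube assms by simp
next
  case False
  have "cnt u v w X1 \<le> 2" "cnt u v w X2 \<le> 2" "cnt u v w X3 \<le> 2" "cnt u v w X1 + cnt u v w X2 + cnt u v w X3 = 3"
    using assms False unfolding cnt_def by auto
  then show ?thesis unfolding xxx_eq[OF assms] by (rule Rv_mono)
qed


lemma Rv_inv: "h \<in> Rv \<Longrightarrow> p \<in> V \<Longrightarrow> h (gmap p) = h p"
  unfolding Rv_def using gen_alg_inv gmap_V by fastforce

inductive_set Mod :: "(pt \<Rightarrow> complex) set \<Rightarrow> (pt \<Rightarrow> complex) set" for B where
  base: "m \<in> B \<Longrightarrow> m \<in> Mod B"
| zero: "(\<lambda>_. 0) \<in> Mod B"
| add: "f \<in> Mod B \<Longrightarrow> h \<in> Mod B \<Longrightarrow> (\<lambda>p. f p + h p) \<in> Mod B"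
| smul: "h \<in> Rv \<Longrightarrow> f \<in> Mod B \<Longrightarrow> (\<lambda>p. h p * f p) \<in> Mod B"
| eqV: "f \<in> Mod B \<Longrightarrow> (\<And>p. p \<in> V \<Longrightarrow> f' p = f p) \<Longrightarrow> f' \<in> Mod B"

lemma Mod_base_eq: "m \<in> B \<Longrightarrow> (\<And>p. f p = m p) \<Longrightarrow> f \<in> Mod B"
  using Mod.base Mod.eqV by metis

lemma Mod_smul_base: "h \<in> Rv \<Longrightarrow> m \<in> B \<Longrightarrow> (\<And>p. p \<in> V \<Longrightarrow> f p = h p * m p) \<Longrightarrow> f \<in> Mod B"
  by (rule Mod.eqV[OF Mod.smul[OF _ Mod.base]])

lemma Mod_prod1:
  assumes "f' \<in> Mod B'" "b \<in> B" "\<forall>b\<in>B. \<forall>b'\<in>B'. (\<lambda>p. b p * b' p) \<in> Mod C"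
  shows "(\<lambda>p. b p * f' p) \<in> Mod C"
  using assms(1)
proof (induction rule: Mod.induct)
  case (base m) then show ?case using assms by blast
next
  case zero then show ?case by (simp add: Mod.zero)
next
  case (add f h) then show ?case using Mod.add[OF add.IH] by (simp add: distrib_left)
next
  case (smul h f) then show ?case using Mod.smul[OF smul.hyps(1) smul.IH] by (simp add: mult.left_commute)
next
  case (eqV f f') then show ?case by (intro Mod.eqV[OF eqV.IH]) simp
qed

lemma Mod_prod:
  assumes "f \<in> Mod B" "f' \<in> Mod B'" "\<forall>b\<in>B. \<forall>b'\<in>B'. (\<lambda>p. b p * b' p) \<in> Mod C"
  shows "(\<lambda>p. f p * f' p) \<in> Mod C"
  using assms(1)
proof (induction rule: Mod.induct)
  case (base m) then show ?case using Mod_prod1 assms by blast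
next
  case zero then show ?case by (simp add: Mod.zero)
next
  case (add f h) then show ?case using Mod.add[OF add.IH] by (simp add: distrib_right)
next
  case (smul h f) then show ?case using Mod.smul[OF smul.hyps(1) smul.IH] by (simp add: mult.assoc)
next
  case (eqV f f') then show ?case by (intro Mod.eqV[OF eqV.IH]) simp
qed

lemma Mod_sum: "finite A \<Longrightarrow> (\<And>i. i \<in> A \<Longrightarrow> F i \<in> Mod B) \<Longrightarrow> (\<lambda>p. \<Sum>i\<in>A. F i p) \<in> Mod B"
proof (induction A rule: finite_induct)
  case empty then show ?case by (simp add: Mod.zero)
next
  case (insert x A) then show ?case using Mod.add[of "F x" B "\<lambda>p. \<Sum>i\<in>A. F i p"] by simp
qed

lemma Mod_weight:
  assumes "f \<in> Mod B" "\<And>m p. m \<in> B \<Longrightarrow> p \<in> V \<Longrightarrow> m (gmap p) = c * m p" "p \<in> V"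
  shows "f (gmap p) = c * f p"
  using assms(1,3)
proof (induction arbitrary: p rule: Mod.induct)
  case (base m) then show ?case using assms(2) by blast
next
  case zero then show ?case by simp
next
  case (add f h) then show ?case by (simp add: distrib_left)
next
  case (smul h f) then show ?case using Rv_inv by (simp add: mult.left_commute)
next
  case (eqV f f') then show ?case using gmap_V by simp
qed

lemma Mod1_Rv: "f \<in> Mod {(\<lambda>p. 1 * 1)} \<Longrightarrow> f \<in> Rv"
proof (induction rule: Mod.induct)
  case (base m) then show ?case using Rv_const[of 1] by simp
next
  case zero then show ?case using Rv_const .
next
  case (add f h) show ?case by (rule Rv_add[OF add.IH])
next
  case (smul h f) show ?case by (rule Rv_mult[OF smul.hyps(1) smul.IH])
next
  case (eqV f f') then show ?case using Rv_eq by blast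
qed


definition XB :: "nat \<Rightarrow> (pt \<Rightarrow> complex) set" where
  "XB a = (if a = 0 then {(\<lambda>p. 1)} else if a = 1 then {(\<lambda>p. p u) | u. u \<in> {X1,X2,X3}}
           else {(\<lambda>p. p u * p v) | u v. u \<in> {X1,X2,X3} \<and> v \<in> {X1,X2,X3}})"
definition YB :: "nat \<Rightarrow> (pt \<Rightarrow> complex) set" where
  "YB b = (if b = 0 then {(\<lambda>p. 1)} else {(\<lambda>p. p u) | u. u \<in> {Y1,Y2,Y3}})"
definition BB :: "nat \<Rightarrow> nat \<Rightarrow> (pt \<Rightarrow> complex) set" where
  "BB a b = {(\<lambda>p. m p * n p) | m n. m \<in> XB a \<and> n \<in> YB b}"

lemma XB_mul:
  assumes "a1 < 3" "a2 < 3" "m \<in> XB a1" "m' \<in> XB a2"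
  shows "(\<lambda>p. m p * m' p) \<in> Mod (XB ((a1 + a2) mod 3))"
proof -
  have "a1 = 0 \<or> a1 = 1 \<or> a1 = 2" "a2 = 0 \<or> a2 = 1 \<or> a2 = 2" using assms by auto
  then consider "a1 = 0" | "a2 = 0" | "a1 = 1" "a2 = 1" | "a1 = 1" "a2 = 2" | "a1 = 2" "a2 = 1"
     | "a1 = 2" "a2 = 2" by blast
  then show ?thesis
  proof cases
    case 1 then show ?thesis using assms by (intro Mod_base_eq[of m']) (auto simp: XB_def)
  next
    case 2 then show ?thesis using assms by (intro Mod_base_eq[of m]) (auto simp: XB_def)
  next
    case 3 then show ?thesis using assms by (intro Mod.base) (auto simp: XB_def)
  next
    case 4
    then obtain u v w where uvw: "u \<in> {X1,X2,X3}" "v \<in> {X1,X2,X3}" "w \<in> {X1,X2,X3}"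
      "m = (\<lambda>p. p u)" "m' = (\<lambda>p. p v * p w)" using assms by (auto simp: XB_def)
    show ?thesis
      by (rule Mod_smul_base[OF Rv_xxx[OF uvw(1-3)], of "\<lambda>p. 1"]) (auto simp: 4 XB_def uvw mult.assoc)
  next
    case 5
    then obtain u v w where uvw: "u \<in> {X1,X2,X3}" "v \<in> {X1,X2,X3}" "w \<in> {X1,X2,X3}"
      "m = (\<lambda>p. p u * p v)" "m' = (\<lambda>p. p w)" using assms by (auto simp: XB_def)
    show ?thesis
      by (rule Mod_smul_base[OF Rv_xxx[OF uvw(1-3)], of "\<lambda>p. 1"]) (auto simp: 5 XB_def uvw mult.assoc)
  next
    case 6
    then obtain u v w z where uvw: "u \<in> {X1,X2,X3}" "v \<in> {X1,X2,X3}" "w \<in> {X1,X2,X3}" "z \<in> {X1,X2,X3}"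
      "m = (\<lambda>p. p u * p v)" "m' = (\<lambda>p. p w * p z)" using assms by (auto simp: XB_def)
    show ?thesis
      by (rule Mod_smul_base[OF Rv_xxx[OF uvw(1-3)], of "\<lambda>p. p z"]) (use uvw(4) in \<open>auto simp: 6 XB_def uvw mult_ac\<close>)
  qed
qed

lemma YB_mul:
  assumes "b1 < 2" "b2 < 2" "m \<in> YB b1" "m' \<in> YB b2"
  shows "(\<lambda>p. m p * m' p) \<in> Mod (YB ((b1 + b2) mod 2))"
proof -
  consider "b1 = 0" | "b2 = 0" | "b1 = 1" "b2 = 1" using assms by linarith
  then show ?thesis
  proof cases
    case 1 then show ?thesis using assms by (intro Mod_base_eq[of m']) (auto simp: YB_def)
  next
    case 2 then show ?thesis using assms by (intro Mod_base_eq[of m]) (auto simp: YB_def)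
  next
    case 3
    then obtain u v where uv: "u \<in> {Y1,Y2,Y3}" "v \<in> {Y1,Y2,Y3}"
      "m = (\<lambda>p. p u)" "m' = (\<lambda>p. p v)" using assms by (auto simp: YB_def)
    show ?thesis
      by (rule Mod_smul_base[OF Rv_yy[OF uv(1-2)], of "\<lambda>p. 1"]) (auto simp: 3 YB_def uv)
  qed
qed

lemma BB_mul:
  assumes "a1 < 3" "a2 < 3" "b1 < 2" "b2 < 2" "m \<in> BB a1 b1" "m' \<in> BB a2 b2"
  shows "(\<lambda>p. m p * m' p) \<in> Mod (BB ((a1 + a2) mod 3) ((b1 + b2) mod 2))"
proof -
  obtain x y x' y' where xy: "x \<in> XB a1" "y \<in> YB b1" "x' \<in> XB a2" "y' \<in> YB b2"
    "m = (\<lambda>p. x p * y p)" "m' = (\<lambda>p. x' p * y' p)" using assms(5,6) by (auto simp: BB_def)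
  have "(\<lambda>p. (x p * x' p) * (y p * y' p)) \<in> Mod (BB ((a1 + a2) mod 3) ((b1 + b2) mod 2))"
    by (rule Mod_prod[OF XB_mul[OF assms(1,2) xy(1,3)] YB_mul[OF assms(3,4) xy(2,4)]])
       (auto simp: BB_def intro: Mod.base)
  then show ?thesis unfolding xy by (simp add: mult_ac)
qed

lemma Mod_BB_mul:
  assumes "a1 < 3" "a2 < 3" "b1 < 2" "b2 < 2" "f \<in> Mod (BB a1 b1)" "f' \<in> Mod (BB a2 b2)"
  shows "(\<lambda>p. f p * f' p) \<in> Mod (BB ((a1 + a2) mod 3) ((b1 + b2) mod 2))"
  using Mod_prod[OF assms(5,6)] BB_mul[OF assms(1-4)] by blast

lemma BB_weight:
  assumes "a < 3" "b < 2" "m \<in> BB a b"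
  shows "m (gmap p) = omega ^ a * (-1) ^ b * m p"
proof -
  obtain x y where xy: "x \<in> XB a" "y \<in> YB b" "m = (\<lambda>p. x p * y p)"
    using assms(3) by (auto simp: BB_def)
  have "x (gmap p) = omega ^ a * x p"
  proof -
    have "a = 0 \<or> a = 1 \<or> a = 2" using assms by auto
    then show ?thesis using xy(1) by (auto simp: XB_def gmap_def power2_eq_square)
  qed
  moreover have "y (gmap p) = (-1) ^ b * y p"
  proof -
    have "b = 0 \<or> b = 1" using assms by auto
    then show ?thesis using xy(2) by (auto simp: YB_def gmap_def)
  qed
  ultimately show ?thesis unfolding xy by (simp add: mult_ac)
qed


lemma one_BB00: "(\<lambda>p. 1 * 1) \<in> BB 0 0"
  unfolding BB_def XB_def YB_def by auto

lemma var_in_BB: "(\<lambda>p. p v) \<in> BB 1 0 \<or> (\<lambda>p. p v) \<in> BB 0 1"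
proof (cases "v \<in> {X1,X2,X3}")
  case True
  then have "(\<lambda>p. p v) \<in> BB 1 0" unfolding BB_def XB_def YB_def
    by (auto intro!: exI[of _ "\<lambda>p. p v"])
  then show ?thesis ..
next
  case False
  then have "v \<in> {Y1,Y2,Y3}" by (cases v) auto
  then have "(\<lambda>p. p v) \<in> BB 0 1" unfolding BB_def XB_def YB_def
    by (auto intro!: exI[of _ "\<lambda>p. p v"])
  then show ?thesis ..
qed

lemma sum32: "(\<Sum>a<3::nat. \<Sum>b<2::nat. F a b) = F 0 0 + F 0 1 + F 1 0 + F 1 1 + F 2 0 + F 2 1"
  by (simp add: numeral_3_eq_3 numeral_2_eq_2 lessThan_Suc algebra_simps)

lemma decomp:
  assumes "f \<in> poly_funs"
  shows "\<exists>F. (\<forall>a<3. \<forall>b<2. F a b \<in> Mod (BB a b)) \<and> (\<forall>p. f p = (\<Sum>a<3. \<Sum>b<2. F a b p))"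
  using assms unfolding poly_funs_def
proof (induction rule: gen_alg.induct)
  case (gen f)
  then obtain v where f: "f = (\<lambda>p. p v)" by blast
  from var_in_BB[of v] show ?case
  proof
    assume h: "(\<lambda>p. p v) \<in> BB 1 0"
    show ?case
      by (rule exI[of _ "\<lambda>a b. if a = 1 \<and> b = 0 then f else (\<lambda>_. 0)"])
         (use Mod.base[OF h] in \<open>auto simp: sum32 f intro: Mod.zero\<close>)
  next
    assume h: "(\<lambda>p. p v) \<in> BB 0 1"
    show ?case
      by (rule exI[of _ "\<lambda>a b. if a = 0 \<and> b = 1 then f else (\<lambda>_. 0)"])
         (use Mod.base[OF h] in \<open>auto simp: sum32 f intro: Mod.zero\<close>)
  qed
next
  case (const c)
  have "(\<lambda>_. c) \<in> Mod (BB 0 0)"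
    by (rule Mod_smul_base[OF Rv_const one_BB00]) simp
  then show ?case
    by (intro exI[of _ "\<lambda>a b. if a = 0 \<and> b = 0 then (\<lambda>_. c) else (\<lambda>_. 0)"])
       (auto simp: sum32 intro: Mod.zero)
next
  case (add f h)
  then obtain F G where F: "\<forall>a<3. \<forall>b<2. F a b \<in> Mod (BB a b)" "\<forall>p. f p = (\<Sum>a<3. \<Sum>b<2. F a b p)"
    and G: "\<forall>a<3. \<forall>b<2. G a b \<in> Mod (BB a b)" "\<forall>p. h p = (\<Sum>a<3. \<Sum>b<2. G a b p)" by blast
  show ?case
    by (rule exI[of _ "\<lambda>a b p. F a b p + G a b p"])
       (use F G in \<open>auto simp: sum.distrib intro: Mod.add\<close>)
next
  case (mult f h)
  then obtain F G where F: "\<forall>a<3. \<forall>b<2. F a b \<in> Mod (BB a b)" "\<forall>p. f p = (\<Sum>a<3. \<Sum>b<2. F a b p)"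
    and G: "\<forall>a<3. \<forall>b<2. G a b \<in> Mod (BB a b)" "\<forall>p. h p = (\<Sum>a<3. \<Sum>b<2. G a b p)" by blast
  define H where "H a b p = (\<Sum>a1<3. \<Sum>b1<2. \<Sum>a2<3. \<Sum>b2<2.
      if (a1 + a2) mod 3 = a \<and> (b1 + b2) mod 2 = b then F a1 b1 p * G a2 b2 p else 0)" for a b p
  have memb: "H a b \<in> Mod (BB a b)" if "a < 3" "b < 2" for a b
  proof -
    have "(\<lambda>p. if (a1 + a2) mod 3 = a \<and> (b1 + b2) mod 2 = b then F a1 b1 p * G a2 b2 p else 0) \<in> Mod (BB a b)"
      if "a1 < 3" "b1 < 2" "a2 < 3" "b2 < 2" for a1 b1 a2 b2
    proof (cases "(a1 + a2) mod 3 = a \<and> (b1 + b2) mod 2 = b")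
      case True
      then show ?thesis using Mod_BB_mul[OF that(1,3,2,4), of "F a1 b1" "G a2 b2"] F(1) G(1) that by auto
    next
      case False then have "\<not> ((a1 + a2) mod 3 = a \<and> (b1 + b2) mod 2 = b)" by blast
      then show ?thesis by (simp only: if_False) (rule Mod.zero)
    qed
    then show ?thesis unfolding H_def[abs_def]
      by (intro Mod_sum) auto
  qed
  have eq: "f p * h p = (\<Sum>a<3. \<Sum>b<2. H a b p)" for p
    unfolding H_def sum32 by (simp add: F(2) G(2) sum32 algebra_simps)
  show ?case
    by (rule exI[of _ H]) (use memb eq in auto)
qed


lemma omega_mod: "omega ^ n = omega ^ (n mod 3)"
proof -
  have "omega ^ n = omega ^ (3 * (n div 3) + n mod 3)" by simp
  also have "\<dots> = omega ^ (n mod 3)" by (simp only: power_add power_mult omega3) simp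
  finally show ?thesis .
qed

lemma char_sum:
  assumes "a < 3" "b < 2"
  shows "(\<Sum>k<6. (omega ^ a * (-1) ^ b) ^ k) = (if a = 0 \<and> b = 0 then 6 else 0)"
proof -
  have o: "omega^4 = omega" "omega^5 = omega^2" "omega^6 = 1" "omega^8 = omega^2" "omega^10 = omega" "omega^3 = 1"
    by (subst omega_mod; simp)+
  have s: "(\<Sum>k<6. z ^ k) = 1 + z + z^2 + z^3 + z^4 + z^5" for z :: complex
    by (simp add: eval_nat_numeral algebra_simps)
  have c1: "1 + omega + omega^2 = 0" by (simp add: omega_sq)
  have "a = 0 \<or> a = 1 \<or> a = 2" "b = 0 \<or> b = 1" using assms by auto
  then consider "a = 0" "b = 0" | "a = 0" "b = 1" | "a = 1" "b = 0" | "a = 1" "b = 1" | "a = 2" "b = 0" | "a = 2" "b = 1"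
    by blast
  then show ?thesis
  proof cases
    case 1 then show ?thesis by (simp add: s)
  next
    case 2 then show ?thesis by (simp add: s)
  next
    case 3 then show ?thesis using c1 by (simp add: s o)
  next
    case 4 then show ?thesis by (simp add: s power_mult_distrib o)
  next
    case 5
    have "(omega^2)^2 = omega" "(omega^2)^3 = 1" "(omega^2)^4 = omega^2" "(omega^2)^5 = omega"
      by (simp_all add: o flip: power_mult)
    then show ?thesis using 5 c1 by (simp add: s algebra_simps)
  next
    case 6
    have "(omega^2)^2 = omega" "(omega^2)^3 = 1" "(omega^2)^4 = omega^2" "(omega^2)^5 = omega"
      by (simp_all add: o flip: power_mult)
    then show ?thesis using 6 c1 by (simp add: s power_mult_distrib algebra_simps)
  qed
qed

lemma iter_V: "p \<in> V \<Longrightarrow> (gmap ^^ k) p \<in> V"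
  by (induction k) (auto simp: gmap_V)

lemma Mod_BB_iter:
  assumes "a < 3" "b < 2" "F \<in> Mod (BB a b)" "p \<in> V"
  shows "F ((gmap ^^ k) p) = (omega ^ a * (-1) ^ b) ^ k * F p"
proof (induction k)
  case 0 then show ?case by simp
next
  case (Suc k)
  have "F ((gmap ^^ Suc k) p) = omega ^ a * (-1) ^ b * F ((gmap ^^ k) p)"
    using Mod_weight[OF assms(3) BB_weight[OF assms(1,2)] iter_V[OF assms(4)]] by simp
  then show ?case using Suc by simp
qed

theorem lemma2p2:
  shows "\<forall>f \<in> poly_funs.
           (\<forall>p \<in> V. f (gmap p) = f p) \<longleftrightarrow> (\<exists>h \<in> gen_alg R_gens. \<forall>p \<in> V. f p = h p)"
proof (rule ballI, rule iffI)
  fix f assume "f \<in> poly_funs" and inv: "\<forall>p \<in> V. f (gmap p) = f p"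
  obtain F where F: "\<forall>a<3. \<forall>b<2. F a b \<in> Mod (BB a b)" "\<forall>p. f p = (\<Sum>a<3. \<Sum>b<2. F a b p)"
    using decomp[OF \<open>f \<in> poly_funs\<close>] by blast
  have BB00: "BB 0 0 = {(\<lambda>p. 1 * 1)}" by (auto simp: BB_def XB_def YB_def)
  have "F 0 0 \<in> Mod (BB 0 0)" using F(1) by simp
  then have "F 0 0 \<in> Rv" using Mod1_Rv unfolding BB00 by blast
  then obtain h where h: "h \<in> gen_alg R_gens" "\<forall>p\<in>V. F 0 0 p = h p" unfolding Rv_def by blast
  have "f p = h p" if p: "p \<in> V" for p
  proof -
    have it: "f ((gmap ^^ k) p) = f p" for k
      by (induction k) (use inv iter_V[OF p] in auto)
    have "6 * f p = (\<Sum>k<6. f ((gmap ^^ k) p))" by (simp add: it)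
    also have "\<dots> = (\<Sum>k<6. \<Sum>a<3. \<Sum>b<2. (omega ^ a * (-1) ^ b) ^ k * F a b p)"
      using Mod_BB_iter[OF _ _ _ p] F by (simp add: F(2))
    also have "\<dots> = (\<Sum>a<3. \<Sum>b<2. (\<Sum>k<6. (omega ^ a * (-1) ^ b) ^ k) * F a b p)"
      by (simp add: sum_distrib_right sum.swap[of _ "{..<6::nat}"])
    also have "\<dots> = (\<Sum>a<3. \<Sum>b<2. (if a = 0 \<and> b = 0 then 6 else 0) * F a b p)"
      by (intro sum.cong refl) (simp add: char_sum)
    also have "\<dots> = 6 * F 0 0 p" by (simp add: sum32)
    finally show ?thesis using h p by simp
  qed
  then show "\<exists>h \<in> gen_alg R_gens. \<forall>p \<in> V. f p = h p" using h by blast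
next
  fix f assume "f \<in> poly_funs" "\<exists>h \<in> gen_alg R_gens. \<forall>p \<in> V. f p = h p"
  then obtain h where h: "h \<in> gen_alg R_gens" "\<forall>p\<in>V. f p = h p" by blast
  show "\<forall>p \<in> V. f (gmap p) = f p"
    using h gmap_V gen_alg_inv by simp
qed

end
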